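(* Let $J\subseteq S$. For every $w\in\mathfrak{S}_n^J$ there is a unique $w'\in\mathfrak{S}_n^J(231)$ such that $\mathrm{inv}(w')$ is the maximum under containment among all $J$-compressed inversion sets $\mathrm{inv}(u)$, $u\in\mathfrak{S}_n^J$, with $\mathrm{inv}(u)\subseteq\mathrm{inv}(w)$; that is, $\mathrm{inv}(w')\subseteq\mathrm{inv}(w)$, $\mathrm{inv}(w')$ is $J$-compressed, and every $u\in\mathfrak{S}_n^J$ with $\mathrm{inv}(u)$ $J$-compressed and $\mathrm{inv}(u)\subseteq\mathrm{inv}(w)$ satisfies $\mathrm{inv}(u)\subseteq\mathrm{inv}(w')$.
   Context: $\mathfrak{S}_n$ is the symmetric group on $[n]$, $s_i=(i,i+1)$, $S=\{s_1,\dots,s_{n-1}\}$, one-line notation $w=w_1\cdots w_n$, $\mathrm{inv}(w)=\{(i,j):i<j,\ w_i>w_j\}$, $\mathrm{des}(w)=\{(i,j)\in\mathrm{inv}(w):w_i=w_j+1\}$. For $J\subseteq S$, $\mathfrak{S}_n^J$ is the set of $w$ with $w_i<w_{i+1}$ whenever $s_i\in J$. Writing $J=S\setminus\{s_{j_1},\dots,s_{j_r}\}$ with $j_1<\dots<j_r$, the $J$-regions are $\{1,\dots,j_1\},\{j_1+1,\dots,j_2\},\dots,\{j_r+1,\dots,n\}$. $\mathfrak{S}_n^J(231)$ is the set of $w\in\mathfrak{S}_n^J$ admitting no indices $i<j<k$ in pairwise different $J$-regions with $w_k<w_i<w_j$ and $w_i=w_k+1$. A set $\mathrm{inv}(w)$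 is $J$-compressed if whenever $i<j<k$ lie in pairwise different $J$-regions and $(i,k)\in\mathrm{des}(w)$, then $(i,j)\in\mathrm{inv}(w)$. *)

theory Defs
  imports "HOL-Combinatorics.Permutations"
begin

(* Permutations of [n] = {1..n} are functions w :: nat => nat with w permutes {1..n};
   w i is the i-th letter of the one-line notation.
   A subset J of S = {s_1,...,s_{n-1}} is represented by the index set
   J :: nat set, J \<subseteq> {1..<n}, where i \<in> J means s_i \<in> J. *)

definition perms :: "nat \<Rightarrow> (nat \<Rightarrow> nat) set" where
  "perms n = {w. w permutes {1..n}}"

definition inv_set :: "nat \<Rightarrow> (nat \<Rightarrow> nat) \<Rightarrow> (nat \<times> nat) set" where
  "inv_set n w = {(i, j). 1 \<le> i \<and> i < j \<and> j \<le> n \<and> w i > w j}"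

definition des_set :: "nat \<Rightarrow> (nat \<Rightarrow> nat) \<Rightarrow> (nat \<times> nat) set" where
  "des_set n w = {(i, j). (i, j) \<in> inv_set n w \<and> w i = w j + 1}"

definition parabolic :: "nat \<Rightarrow> nat set \<Rightarrow> (nat \<Rightarrow> nat) set" where
  "parabolic n J = {w \<in> perms n. \<forall>i \<in> J. w i < w (Suc i)}"

(* index of the J-region containing position i: the number of j_t = indices of
   s_{j_t} \<notin> J with j_t < i. Regions {1..j_1}, {j_1+1..j_2}, ... *)
definition region :: "nat \<Rightarrow> nat set \<Rightarrow> nat \<Rightarrow> nat" where
  "region n J i = card {k \<in> {1..<n} - J. k < i}"

definition diff_regions :: "nat \<Rightarrow> nat set \<Rightarrow> nat \<Rightarrow> nat \<Rightarrow> nat \<Rightarrow> bool" where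
  "diff_regions n J i j k \<longleftrightarrow>
     region n J i \<noteq> region n J j \<and> region n J j \<noteq> region n J k \<and> region n J i \<noteq> region n J k"

definition avoid231 :: "nat \<Rightarrow> nat set \<Rightarrow> (nat \<Rightarrow> nat) set" where
  "avoid231 n J = {w \<in> parabolic n J. \<not> (\<exists>i j k. 1 \<le> i \<and> i < j \<and> j < k \<and> k \<le> n \<and>
       diff_regions n J i j k \<and> w k < w i \<and> w i < w j \<and> w i = w k + 1)}"

definition compressed :: "nat \<Rightarrow> nat set \<Rightarrow> (nat \<Rightarrow> nat) \<Rightarrow> bool" where
  "compressed n J w \<longleftrightarrow> (\<forall>i j k. 1 \<le> i \<and> i < j \<and> j < k \<and> k \<le> n \<and>
       diff_regions n J i j k \<and> (i, k) \<in> des_set n w \<longrightarrow> (i, j) \<in> inv_set n w)"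

end

theory Submission
  imports Defs
begin

lemma region_mono: "i \<le> i' \<Longrightarrow> region n J i \<le> region n J i'"
  unfolding region_def by (rule card_mono) auto

lemma region_lt: "i \<le> i' \<Longrightarrow> region n J i \<noteq> region n J i' \<Longrightarrow> region n J i < region n J i'"
  using region_mono[of i i' n J] by simp

lemma key:
  assumes up: "u permutes {1..n}" and comp: "compressed n J u"
    and ijk: "1 \<le> i" "i < j" "j < k" "k \<le> n" and dr: "diff_regions n J i j k"
    and vals: "u k < u i" "u i < u j"
    and H: "\<forall>p. i < p \<and> p < k \<longrightarrow> \<not> (u k \<le> u p \<and> u p \<le> u i)"
  shows False
proof -
  define pos where "pos = inv u"
  have upos: "\<And>y. u (pos y) = y" and posu: "\<And>x. pos (u x) = x"
    using permutes_inverses[OF up] unfolding pos_def by auto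
  have posp: "pos permutes {1..n}" unfolding pos_def by (rule permutes_inv[OF up])
  have ui_in: "u i \<in> {1..n}" "u k \<in> {1..n}"
    using permutes_in_image[OF up] ijk by auto
  define S where "S = {y. u k \<le> y \<and> y \<le> u i \<and> pos y < j}"
  have "u i \<in> S" unfolding S_def using vals ijk posu by auto
  define y0 where "y0 = (LEAST y. y \<in> S)"
  have y0S: "y0 \<in> S" unfolding y0_def using \<open>u i \<in> S\<close> by (rule LeastI)
  have y0ne: "y0 \<noteq> u k" using y0S ijk posu unfolding S_def by auto
  hence y0gt: "y0 > u k" using y0S unfolding S_def by auto
  have y1: "y0 - 1 \<notin> S"
  proof
    assume "y0 - 1 \<in> S"
    hence "y0 \<le> y0 - 1" unfolding y0_def by (rule Least_le)
    thus False using y0gt by simp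
  qed
  define a where "a = pos y0"
  define b where "b = pos (y0 - 1)"
  have ua: "u a = y0" and ub: "u b = y0 - 1" unfolding a_def b_def by (auto simp: upos)
  have aj: "a < j" using y0S unfolding S_def a_def by auto
  have bj: "b \<ge> j" using y1 y0gt y0S unfolding S_def b_def by auto
  have y0le: "y0 \<le> u i" using y0S unfolding S_def by auto
  have "b \<noteq> j" using ub vals y0le by auto
  hence bj': "b > j" using bj by simp
  have ain: "a \<in> {1..n}"
  proof -
    have "y0 \<in> {1..n}" using y0gt y0le ui_in by auto
    thus ?thesis unfolding a_def using permutes_in_image[OF posp] by auto
  qed
  have bin: "b \<in> {1..n}"
  proof -
    have "y0 - 1 \<in> {1..n}" using y0gt y0le ui_in by auto
    thus ?thesis unfolding b_def using permutes_in_image[OF posp] by auto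
  qed
  have rij: "region n J i < region n J j" using dr ijk region_lt[of i j n J]
    unfolding diff_regions_def by simp
  have rjk: "region n J j < region n J k" using dr ijk region_lt[of j k n J]
    unfolding diff_regions_def by simp
  have ra: "region n J a \<noteq> region n J j"
  proof
    assume eq: "region n J a = region n J j"
    show False
    proof (cases "a \<le> i")
      case True
      thus False using region_mono[of a i n J] rij eq by simp
    next
      case False
      thus False using H[rule_format, of a] aj ijk ua y0gt y0le by auto
    qed
  qed
  have rb: "region n J b \<noteq> region n J j"
  proof
    assume eq: "region n J b = region n J j"
    show False
    proof (cases "k \<le> b")
      case True
      thus False using region_mono[of k b n J] rjk eq by simp
    next
      case False
      thus False using H[rule_format, of b] bj' ijk ub y0gt y0le by auto
    qed
  qed
  have raj: "region n J a < region n J j" using region_lt[of a j n J] aj ra by simp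
  have rjb: "region n J j < region n J b" using region_lt[of j b n J] bj' rb by simp
  have drr: "diff_regions n J a j b" unfolding diff_regions_def using raj rjb by simp
  have des: "(a, b) \<in> des_set n u"
    unfolding des_set_def inv_set_def using ain bin aj bj' ua ub y0gt by auto
  have "(a, j) \<in> inv_set n u"
    using comp des drr ain aj bj' bin unfolding compressed_def by auto
  hence "u a > u j" unfolding inv_set_def by auto
  thus False using ua y0le vals by simp
qed

lemma swap_order:
  fixes a b x y :: nat
  assumes "a = b + 1" "x \<noteq> y"
  shows "(transpose a b x > transpose a b y) \<longleftrightarrow> (x > y \<and> \<not> (x = a \<and> y = b)) \<or> (x = b \<and> y = a)"
  using assms unfolding transpose_def
  by (cases "x = a"; cases "x = b"; cases "y = a"; cases "y = b") auto

lemma inv_determines: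
  assumes p1: "w1 permutes {1..n}" and p2: "w2 permutes {1..n}"
    and eq: "inv_set n w1 = inv_set n w2"
  shows "w1 = w2"
proof
  fix x
  show "w1 x = w2 x"
  proof (cases "x \<in> {1..n}")
    case False
    thus ?thesis using permutes_not_in[OF p1 False] permutes_not_in[OF p2 False] by simp
  next
    case True
    define T where "T = {p \<in> {1..n}. p = x \<or> (p < x \<and> (p, x) \<notin> inv_set n w1) \<or> (x < p \<and> (x, p) \<in> inv_set n w1)}"
    have cardw: "card {p \<in> {1..n}. w p \<le> w x} = w x" if wp: "w permutes {1..n}" for w :: "nat \<Rightarrow> nat"
    proof -
      have inj: "inj_on w {p \<in> {1..n}. w p \<le> w x}"
        using permutes_inj[OF wp] by (auto intro: inj_on_subset)
      have img: "w ` {p \<in> {1..n}. w p \<le> w x} = {1..w x}"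
      proof
        show "w ` {p \<in> {1..n}. w p \<le> w x} \<subseteq> {1..w x}"
        proof
          fix z assume "z \<in> w ` {p \<in> {1..n}. w p \<le> w x}"
          then obtain p where p: "p \<in> {1..n}" "w p \<le> w x" "z = w p" by blast
          have "w p \<in> {1..n}" using permutes_in_image[OF wp] p(1) by blast
          thus "z \<in> {1..w x}" using p by auto
        qed
      next
        show "{1..w x} \<subseteq> w ` {p \<in> {1..n}. w p \<le> w x}"
        proof
          fix y assume y: "y \<in> {1..w x}"
          have "w x \<in> {1..n}" using permutes_in_image[OF wp] True by auto
          hence yin: "y \<in> {1..n}" using y by auto
          have p1: "inv w y \<in> {1..n}" using permutes_in_image[OF permutes_inv[OF wp]] yin by blast
          have p2: "w (inv w y) = y" using permutes_inverses(1)[OF wp] by blast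
          obtain p where "p \<in> {1..n}" "w p = y" using p1 p2 by blast
          thus "y \<in> w ` {p \<in> {1..n}. w p \<le> w x}" using y by auto
        qed
      qed
      have "card (w ` {p \<in> {1..n}. w p \<le> w x}) = card {p \<in> {1..n}. w p \<le> w x}" by (rule card_image[OF inj])
      thus ?thesis unfolding img by simp
    qed
    have setw: "{p \<in> {1..n}. w p \<le> w x} = {p \<in> {1..n}. p = x \<or> (p < x \<and> (p, x) \<notin> inv_set n w) \<or> (x < p \<and> (x, p) \<in> inv_set n w)}"
      if wp: "w permutes {1..n}" for w :: "nat \<Rightarrow> nat"
    proof (rule set_eqI)
      fix p
      have ne: "p \<noteq> x \<Longrightarrow> w p \<noteq> w x" using inj_eq[OF permutes_inj[OF wp]] by auto
      show "p \<in> {p \<in> {1..n}. w p \<le> w x} \<longleftrightarrow> p \<in> {p \<in> {1..n}. p = x \<or> (p < x \<and> (p, x) \<notin> inv_set n w) \<or> (x < p \<and> (x, p) \<in> inv_set n w)}"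
      proof (cases "p = x")
        case True
        thus ?thesis by simp
      next
        case False
        hence "w p \<noteq> w x" by (rule ne)
        thus ?thesis using False True unfolding inv_set_def by auto
      qed
    qed
    have "w1 x = card T" unfolding T_def using cardw[OF p1] setw[OF p1] by simp
    also have "\<dots> = w2 x" unfolding T_def eq using cardw[OF p2] setw[OF p2] by simp
    finally show ?thesis .
  qed
qed

lemma inv_set_finite: "finite (inv_set n w)"
proof -
  have "inv_set n w \<subseteq> {1..n} \<times> {1..n}" unfolding inv_set_def by auto
  thus ?thesis by (rule finite_subset) simp
qed

lemma not_inv_lt:
  assumes "w permutes {1..n}" "1 \<le> p" "p < q" "q \<le> n" "(p, q) \<notin> inv_set n w"
  shows "w p < w q"
proof -
  have "w p \<noteq> w q" using inj_eq[OF permutes_inj[OF assms(1)]] assms(3) by auto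
  thus ?thesis using assms unfolding inv_set_def by auto
qed

lemma exists_max:
  assumes J: "J \<subseteq> {1..<n}"
  shows "w \<in> parabolic n J \<Longrightarrow> \<exists>w'. w' \<in> parabolic n J \<and> compressed n J w' \<and> inv_set n w' \<subseteq> inv_set n w \<and>
    (\<forall>u\<in>parabolic n J. compressed n J u \<and> inv_set n u \<subseteq> inv_set n w \<longrightarrow> inv_set n u \<subseteq> inv_set n w')"
proof (induction "card (inv_set n w)" arbitrary: w rule: less_induct)
  case less
  show ?case
  proof (cases "compressed n J w")
    case True
    then show ?thesis using less.prems by blast
  next
    case False
    then obtain i j k where ijk: "1 \<le> i" "i < j" "j < k" "k \<le> n" "diff_regions n J i j k"
      "(i, k) \<in> des_set n w" "(i, j) \<notin> inv_set n w" unfolding compressed_def by blast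
    have wp: "w permutes {1..n}" using less.prems by (simp add: parabolic_def perms_def)
    have winj: "inj w" by (rule permutes_inj[OF wp])
    have wik: "w i = w k + 1" using ijk(6) by (simp add: des_set_def)
    have ikinv: "(i, k) \<in> inv_set n w" using ijk(6) by (simp add: des_set_def)
    define w1 where "w1 = transpose (w i) (w k) \<circ> w"
    have w1p: "w1 permutes {1..n}" unfolding w1_def
      by (rule permutes_compose[OF wp permutes_swap_id]) (use permutes_in_image[OF wp] ijk in auto)
    have inv1: "inv_set n w1 = inv_set n w - {(i, k)}"
    proof -
      have "\<And>p q. p < q \<Longrightarrow> (w1 p > w1 q) \<longleftrightarrow> (w p > w q \<and> \<not> (p = i \<and> q = k))"
      proof -
        fix p q :: nat assume pq: "p < q"
        have ne: "w p \<noteq> w q" using inj_eq[OF winj] pq by auto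
        have e1: "w p = w i \<longleftrightarrow> p = i" "w q = w k \<longleftrightarrow> q = k" "w q = w i \<longleftrightarrow> q = i" "w p = w k \<longleftrightarrow> p = k"
          using winj by (auto dest: injD)
        show "(w1 p > w1 q) \<longleftrightarrow> (w p > w q \<and> \<not> (p = i \<and> q = k))"
          unfolding w1_def comp_def using swap_order[OF wik ne] e1 pq ijk by auto
      qed
      thus ?thesis unfolding inv_set_def by auto
    qed
    have par1: "w1 \<in> parabolic n J"
      unfolding parabolic_def perms_def
    proof (intro CollectI conjI ballI)
      show "w1 permutes {1..n}" by (rule w1p)
    next
      fix p assume pJ: "p \<in> J"
      have pr: "1 \<le> p" "p < Suc p" "Suc p \<le> n" using pJ J by auto
      have "w p < w (Suc p)" using less.prems pJ by (simp add: parabolic_def)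
      hence "(p, Suc p) \<notin> inv_set n w" unfolding inv_set_def by auto
      hence "(p, Suc p) \<notin> inv_set n w1" using inv1 by auto
      thus "w1 p < w1 (Suc p)" using not_inv_lt[OF w1p pr] by blast
    qed
    have "card (inv_set n w1) < card (inv_set n w)"
      unfolding inv1 using ikinv inv_set_finite by (meson card_Diff1_less)
    from less.hyps[OF this par1] obtain w' where w':
      "w' \<in> parabolic n J" "compressed n J w'" "inv_set n w' \<subseteq> inv_set n w1"
      "\<forall>u\<in>parabolic n J. compressed n J u \<and> inv_set n u \<subseteq> inv_set n w1 \<longrightarrow> inv_set n u \<subseteq> inv_set n w'"
      by blast
    have "inv_set n u \<subseteq> inv_set n w'"
      if u: "u \<in> parabolic n J" "compressed n J u" "inv_set n u \<subseteq> inv_set n w" for u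
    proof -
      have up: "u permutes {1..n}" using u by (simp add: parabolic_def perms_def)
      have "(i, k) \<notin> inv_set n u"
      proof
        assume ik: "(i, k) \<in> inv_set n u"
        have uik: "u k < u i" using ik unfolding inv_set_def by auto
        have "(i, j) \<notin> inv_set n u" using ijk(7) u(3) by auto
        hence uij: "u i < u j" using not_inv_lt[OF up, of i j] ijk by auto
        have H: "\<forall>p. i < p \<and> p < k \<longrightarrow> \<not> (u k \<le> u p \<and> u p \<le> u i)"
        proof (intro allI impI)
          fix p assume p: "i < p \<and> p < k"
          have n1: "w p \<noteq> w i" "w p \<noteq> w k" using p winj by (auto dest: injD)
          show "\<not> (u k \<le> u p \<and> u p \<le> u i)"
          proof (cases "w p > w i")
            case True
            hence "(i, p) \<notin> inv_set n w" unfolding inv_set_def by auto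
            hence "(i, p) \<notin> inv_set n u" using u(3) by auto
            hence "u i < u p" using not_inv_lt[OF up, of i p] ijk p by auto
            thus ?thesis by simp
          next
            case False
            hence "w p < w k" using n1 wik by auto
            hence "(p, k) \<notin> inv_set n w" unfolding inv_set_def by auto
            hence "(p, k) \<notin> inv_set n u" using u(3) by auto
            hence "u p < u k" using not_inv_lt[OF up, of p k] ijk p by auto
            thus ?thesis by simp
          qed
        qed
        show False by (rule key[OF up u(2) ijk(1-5) uik uij H])
      qed
      hence "inv_set n u \<subseteq> inv_set n w1" using u(3) inv1 by auto
      thus ?thesis using w'(4) u by blast
    qed
    thus ?thesis using w' inv1 by blast
  qed
qed

lemma compressed_avoid:
  assumes "w \<in> parabolic n J" "compressed n J w"
  shows "w \<in> avoid231 n J"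
  unfolding avoid231_def
proof (intro CollectI conjI notI)
  show "w \<in> parabolic n J" by (rule assms(1))
next
  assume "\<exists>i j k. 1 \<le> i \<and> i < j \<and> j < k \<and> k \<le> n \<and>
       diff_regions n J i j k \<and> w k < w i \<and> w i < w j \<and> w i = w k + 1"
  then obtain i j k where h: "1 \<le> i" "i < j" "j < k" "k \<le> n"
       "diff_regions n J i j k" "w k < w i" "w i < w j" "w i = w k + 1" by blast
  have "(i, k) \<in> des_set n w" unfolding des_set_def inv_set_def using h by auto
  hence "(i, j) \<in> inv_set n w" using assms(2) h unfolding compressed_def by blast
  thus False unfolding inv_set_def using h by auto
qed

theorem lemma3p8:
  fixes n :: nat and J :: "nat set" and w :: "nat \<Rightarrow> nat"
  assumes "J \<subseteq> {1..<n}"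
    and "w \<in> parabolic n J"
  shows "\<exists>!w'. w' \<in> avoid231 n J \<and> inv_set n w' \<subseteq> inv_set n w \<and> compressed n J w' \<and>
           (\<forall>u \<in> parabolic n J. compressed n J u \<and> inv_set n u \<subseteq> inv_set n w
              \<longrightarrow> inv_set n u \<subseteq> inv_set n w')"
proof -
  obtain w' where w': "w' \<in> parabolic n J" "compressed n J w'" "inv_set n w' \<subseteq> inv_set n w"
    "\<forall>u\<in>parabolic n J. compressed n J u \<and> inv_set n u \<subseteq> inv_set n w \<longrightarrow> inv_set n u \<subseteq> inv_set n w'"
    using exists_max[OF assms] by blast
  show ?thesis
  proof (rule ex1I[of _ w'])
    show "w' \<in> avoid231 n J \<and> inv_set n w' \<subseteq> inv_set n w \<and> compressed n J w' \<and>
           (\<forall>u \<in> parabolic n J. compressed n J u \<and> inv_set n u \<subseteq> inv_set n w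
              \<longrightarrow> inv_set n u \<subseteq> inv_set n w')"
      using w' compressed_avoid by blast
  next
    fix v assume v: "v \<in> avoid231 n J \<and> inv_set n v \<subseteq> inv_set n w \<and> compressed n J v \<and>
           (\<forall>u \<in> parabolic n J. compressed n J u \<and> inv_set n u \<subseteq> inv_set n w
              \<longrightarrow> inv_set n u \<subseteq> inv_set n v)"
    have vpar: "v \<in> parabolic n J" using v by (simp add: avoid231_def)
    have "inv_set n v = inv_set n w'" using v w' vpar by blast
    moreover have "v permutes {1..n}" "w' permutes {1..n}"
      using vpar w'(1) by (simp_all add: parabolic_def perms_def)
    ultimately show "v = w'" using inv_determines by blast
  qed
qed

end
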